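(* Let $\psi\in\mathcal K^\star$ have radius of convergence $R_\psi>0$, apex $\tau$ and Khinchin family $(Y_t)$; for $t\in(0,R_\psi)$ let $q(t)$ be the extinction probability of the Galton–Watson process with offspring distribution $Y_t$. Then $q$ is differentiable on $(0,R_\psi)\setminus\{\tau\}$, and its derivative has a jump discontinuity at $t=\tau$: $$\lim_{t\downarrow\tau}\frac{q(t)-1}{t-\tau}=-\frac{2}{\tau},\qquad\lim_{t\uparrow\tau}\frac{q(t)-1}{t-\tau}=0.$$ Moreover, for all $t\in(0,R_\psi)\setminus\{\tau\}$, $$q'(t)=\frac{q(t)}{t}\left(\frac{1-m_\psi(t)}{1-m_\psi(tq(t))}-1\right).$$
   Context: $\mathcal K$ is the class of non-constant power series $f(z)=\sum_{n\ge0}a_nz^n$ with positive radius of convergence $R$, non-negative coefficients and $a_0>0$; its Khinchin family $(X_t)$ is given by $\mathbf P(X_t=n)=a_nt^n/f(t)$ for $n\ge0$, $t\in(0,R)$, with mean $m_f(t)=tf'(t)/f(t)$ (increasing in $t$). $\mathcal K^\star$ is the subclass of $f\in\mathcal K$ with $\lim_{t\uparrow R}m_f(t)>1$; the apex is the unique $\tau\in(0,R)$ with $m_f(\tau)=1$. The extinction probability is the probability that the Galton–Watson tree is finite. *)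

theory Defs
  imports "HOL-Analysis.Analysis"
begin

definition pser :: "(nat \<Rightarrow> real) \<Rightarrow> real \<Rightarrow> real" where
  "pser a t = (\<Sum>n. a n * t ^ n)"

definition in_K :: "(nat \<Rightarrow> real) \<Rightarrow> bool" where
  "in_K a \<longleftrightarrow> (\<forall>n. a n \<ge> 0) \<and> a 0 > 0 \<and> (\<exists>n>0. a n \<noteq> 0) \<and> conv_radius a > 0"

definition mean_K :: "(nat \<Rightarrow> real) \<Rightarrow> real \<Rightarrow> real" where
  "mean_K a t = t * deriv (pser a) t / pser a t"

text \<open>Class K*: lim_{t \<up> R} m(t) > 1 (limit taken in the extended reals; R may be infinite).\<close>
definition in_K_star :: "(nat \<Rightarrow> real) \<Rightarrow> bool" where
  "in_K_star a \<longleftrightarrow> in_K a \<and>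
     (\<exists>L::ereal. ((\<lambda>x. ereal (mean_K a (real_of_ereal x))) \<longlongrightarrow> L) (at_left (conv_radius a)) \<and> L > 1)"

text \<open>Probability generating function of Y_t: E[s^{Y_t}] = f(ts)/f(t).\<close>
definition pgf_K :: "(nat \<Rightarrow> real) \<Rightarrow> real \<Rightarrow> real \<Rightarrow> real" where
  "pgf_K a t s = pser a (t * s) / pser a t"

text \<open>Extinction probability of the Galton--Watson process with offspring law Y_t:
  P(tree finite) = lim_n P(Z_n = 0) = lim_n g_t^{(n)}(0), with g_t the offspring pgf.\<close>
definition extinction_prob :: "(nat \<Rightarrow> real) \<Rightarrow> real \<Rightarrow> real" where
  "extinction_prob a t = lim (\<lambda>n. ((pgf_K a t) ^^ n) 0)"

end

theory Submission
  imports Defs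
begin

lemma ereal_between: fixes x :: real assumes "ereal x < R" shows "\<exists>K. x < K \<and> ereal K < R"
  using ereal_dense2[OF assms] by (metis ereal_less_eq(3) order_less_le)

lemma alg1: "(t::real) > 0 \<Longrightarrow> t \<noteq> c \<Longrightarrow> ((u - c) / (t - c) - 1) / t = (u / t - 1) / (t - c)"
  by (simp add: field_simps)

lemma alg2: "(A::real) < 0 \<Longrightarrow> B > 0 \<Longrightarrow> sqrt ((A/B)^2) = - (A / B)"
  using divide_neg_pos[of A B] by simp

lemma ereal_le_less: "(z::real) \<le> y \<Longrightarrow> ereal y < R \<Longrightarrow> ereal z < R"
  by (metis ereal_less_eq(3) le_less_trans)

lemma diffs_radius: fixes c :: "nat \<Rightarrow> real" shows "conv_radius (diffs c) \<ge> conv_radius c"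
proof (rule conv_radius_geI_ex')
  fix r :: real assume r: "0 < r" "ereal r < conv_radius c"
  obtain K where K: "r < K" "ereal K < conv_radius c" using ereal_between[OF r(2)] by blast
  have "summable (\<lambda>n. diffs c n * r ^ n)"
  proof (rule termdiff_converges[of r K])
    show "norm r < K" using r K by simp
    fix x :: real assume "norm x < K"
    then have "ereal (norm x) < ereal K" by simp
    then have "ereal (norm x) < conv_radius c" using K(2) by (rule less_trans)
    then show "summable (\<lambda>n. c n * x ^ n)" by (rule summable_in_conv_radius)
  qed
  then show "summable (\<lambda>n. diffs c n * of_real r ^ n)" by simp
qed

lemma pser_DERIV: fixes c :: "nat \<Rightarrow> real" assumes "ereal \<bar>x\<bar> < conv_radius c"
  shows "DERIV (pser c) x :> pser (diffs c) x"
proof -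
  obtain K where K: "\<bar>x\<bar> < K" "ereal K < conv_radius c" using ereal_between[OF assms] by blast
  have "((\<lambda>z. \<Sum>n. c n * z^n) has_field_derivative (\<Sum>n. diffs c n * x^n)) (at x)"
  proof (rule termdiffs_strong')
    fix z :: real assume "norm z < K"
    then have "ereal (norm z) < ereal K" by simp
    then have "ereal (norm z) < conv_radius c" using K(2) by (rule less_trans)
    then show "summable (\<lambda>n. c n * z ^ n)" by (rule summable_in_conv_radius)
  qed (use K in simp)
  then show ?thesis unfolding pser_def[abs_def] by simp
qed

lemma pser_nonneg: fixes c :: "nat \<Rightarrow> real" assumes "\<And>n. c n \<ge> 0" "x \<ge> 0" "ereal x < conv_radius c"
  shows "pser c x \<ge> 0"
  unfolding pser_def using assms summable_in_conv_radius[of x c]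
  by (intro suminf_nonneg) auto

lemma diffs_nonneg: fixes c :: "nat \<Rightarrow> real" assumes "\<And>n. c n \<ge> 0" shows "diffs c n \<ge> 0"
  using assms by (simp add: diffs_def)


locale KK =
  fixes a :: "nat \<Rightarrow> real"
  assumes nn: "\<And>n. a n \<ge> 0" and a0: "a 0 > 0" and Rpos: "conv_radius a > 0"
begin

definition "b = (\<lambda>n. a (Suc n))"
definition "P x = pser b x"
definition "P1 x = pser (diffs b) x"
definition "P2 x = pser (diffs (diffs b)) x"
definition "hh x = a 0 / x + P x"
definition "dh x = P1 x - a 0 / x^2"
definition "ddh x = P2 x + 2 * a 0 / x^3"

lemma b_nn: "b n \<ge> 0" using nn by (simp add: b_def)

lemma radb: "conv_radius b = conv_radius a"
  using conv_radius_shift[of a 1] by (simp add: b_def)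

lemma rad1: "conv_radius (diffs b) \<ge> conv_radius a"
  using diffs_radius[of b] radb by simp

lemma rad2: "conv_radius (diffs (diffs b)) \<ge> conv_radius a"
  using diffs_radius[of "diffs b"] rad1 by simp

lemma f_split: assumes "ereal \<bar>x\<bar> < conv_radius a" shows "pser a x = a 0 + x * P x"
  using powser_split_head(1)[OF summable_in_conv_radius[of x a]] assms
  by (simp add: pser_def P_def b_def mult.commute)

lemma P_deriv: assumes "ereal \<bar>x\<bar> < conv_radius a" shows "DERIV P x :> P1 x"
  using pser_DERIV[of x b] assms radb unfolding P_def[abs_def] P1_def by simp

lemma P1_deriv: assumes "ereal \<bar>x\<bar> < conv_radius a" shows "DERIV P1 x :> P2 x"
  using pser_DERIV[of x "diffs b"] assms rad1 unfolding P1_def[abs_def] P2_def by simp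

lemma P_nn: assumes "x \<ge> 0" "ereal x < conv_radius a" shows "P x \<ge> 0" "P1 x \<ge> 0" "P2 x \<ge> 0"
  using assms rad1 rad2 radb b_nn diffs_nonneg[of b] diffs_nonneg[of "diffs b"]
  unfolding P_def P1_def P2_def
  by (auto intro!: pser_nonneg order.strict_trans2[of _ "conv_radius a"] diffs_nonneg b_nn)

lemma f_deriv: assumes "ereal \<bar>x\<bar> < conv_radius a" shows "DERIV (pser a) x :> P x + x * P1 x"
proof -
  obtain K where K: "\<bar>x\<bar> < K" "ereal K < conv_radius a" using ereal_between[OF assms] by blast
  have "DERIV (\<lambda>y. a 0 + y * P y) x :> P x + x * P1 x"
    by (auto intro!: derivative_eq_intros P_deriv[OF assms])
  then show ?thesis
  proof (rule has_field_derivative_transform_within_open[where S="ball (0::real) K"])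
    show "x \<in> ball 0 K" using K by simp
    fix y :: real assume "y \<in> ball 0 K"
    then have "ereal \<bar>y\<bar> < ereal K" by simp
    then have "ereal \<bar>y\<bar> < conv_radius a" using K(2) by (rule less_trans)
    then show "a 0 + y * P y = pser a y" using f_split by simp
  qed simp
qed

lemma f_pos: assumes "x \<ge> 0" "ereal x < conv_radius a" shows "pser a x \<ge> a 0" "pser a x > 0"
proof -
  have "x * P x \<ge> 0" using P_nn[OF assms] assms by simp
  then show "pser a x \<ge> a 0" "pser a x > 0" using f_split[of x] assms a0 by auto
qed

lemma f_mono: assumes "0 \<le> x" "x \<le> y" "ereal y < conv_radius a" shows "pser a x \<le> pser a y"
proof (rule DERIV_nonneg_imp_nondecreasing[OF assms(2)])
  fix z assume z: "x \<le> z" "z \<le> y"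
  then have z0: "0 \<le> z" and zR: "ereal z < conv_radius a" using assms
    by (auto intro: ereal_le_less)
  show "\<exists>d. DERIV (pser a) z :> d \<and> d \<ge> 0"
    using f_deriv[of z] z0 zR P_nn[OF z0 zR] by (intro exI[of _ "P z + z * P1 z"]) auto
qed

lemma f_cont: assumes "ereal \<bar>x\<bar> < conv_radius a" shows "isCont (pser a) x"
  using f_deriv[OF assms] by (rule DERIV_isCont)

lemma mean_eq: assumes "0 < x" "ereal x < conv_radius a"
  shows "mean_K a x = x * (P x + x * P1 x) / pser a x"
  using DERIV_imp_deriv[OF f_deriv[of x]] assms by (simp add: mean_K_def)

lemma hh_eq: assumes "0 < x" "ereal x < conv_radius a" shows "hh x = pser a x / x"
  using f_split[of x] assms by (simp add: hh_def field_simps)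

lemma mean_dh: assumes "0 < x" "ereal x < conv_radius a"
  shows "mean_K a x - 1 = x^2 * dh x / pser a x"
proof -
  have fp: "pser a x > 0" using f_pos[of x] assms by simp
  have "mean_K a x - 1 = (x * (P x + x * P1 x) - pser a x) / pser a x"
    using fp by (simp add: mean_eq[OF assms] field_simps)
  also have "x * (P x + x * P1 x) - pser a x = x^2 * dh x"
    using f_split[of x] assms by (simp add: dh_def field_simps power2_eq_square)
  finally show ?thesis .
qed

lemma hh_deriv: assumes "0 < x" "ereal x < conv_radius a" shows "DERIV hh x :> dh x"
  unfolding hh_def[abs_def] dh_def using assms
  by (auto intro!: derivative_eq_intros P_deriv simp: power2_eq_square field_simps)

lemma dh_deriv: assumes "0 < x" "ereal x < conv_radius a" shows "DERIV dh x :> ddh x"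
  unfolding dh_def[abs_def] ddh_def using assms
  by (auto intro!: derivative_eq_intros P1_deriv simp: power2_eq_square power3_eq_cube field_simps)

lemma ddh_pos: assumes "0 < x" "ereal x < conv_radius a" shows "ddh x > 0"
  unfolding ddh_def using assms P_nn[of x] a0 by (auto intro!: add_nonneg_pos)

lemma dh_mono: assumes "0 < x" "x < y" "ereal y < conv_radius a" shows "dh x < dh y"
proof (rule DERIV_pos_imp_increasing[OF assms(2)])
  fix z assume z: "x \<le> z" "z \<le> y"
  then have z0: "0 < z" and zR: "ereal z < conv_radius a" using assms
    by (auto intro: ereal_le_less)
  show "\<exists>d. DERIV dh z :> d \<and> d > 0"
    using dh_deriv[OF z0 zR] ddh_pos[OF z0 zR] by blast
qed


lemma g_props: assumes t: "0 < t" "ereal t < conv_radius a"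
  shows "\<And>s. 0 \<le> s \<Longrightarrow> s \<le> 1 \<Longrightarrow> 0 \<le> pgf_K a t s \<and> pgf_K a t s \<le> 1"
    and "\<And>s s'. 0 \<le> s \<Longrightarrow> s \<le> s' \<Longrightarrow> s' \<le> 1 \<Longrightarrow> pgf_K a t s \<le> pgf_K a t s'"
    and "pgf_K a t 1 = 1"
    and "pgf_K a t 0 > 0"
    and "\<And>s. 0 \<le> s \<Longrightarrow> s \<le> 1 \<Longrightarrow> isCont (pgf_K a t) s"
proof -
  have ft: "pser a t > 0" using f_pos[of t] t by simp
  fix s :: real assume s: "0 \<le> s" "s \<le> 1"
  have ts: "0 \<le> t * s" "t * s \<le> t" using s t by (auto simp: mult_le_cancel_left1)
  have tsR: "ereal (t * s) < conv_radius a" using ts(2) t(2) by (rule ereal_le_less)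
  show "0 \<le> pgf_K a t s \<and> pgf_K a t s \<le> 1"
    using f_pos[OF ts(1) tsR] f_mono[OF ts t(2)] ft by (simp add: pgf_K_def)
  have "isCont (\<lambda>s. pser a (t * s)) s"
  proof -
    have c: "isCont (pser a) (t * s)" using ts tsR by (intro f_cont) simp
    have "isCont (\<lambda>s. t * s) s" by simp
    from isCont_o2[OF this c] show ?thesis by simp
  qed
  then show "isCont (pgf_K a t) s" unfolding pgf_K_def[abs_def] using ft
    by (auto intro!: continuous_intros)
next
  have ft: "pser a t > 0" using f_pos[of t] t by simp
  fix s s' :: real assume s: "0 \<le> s" "s \<le> s'" "s' \<le> 1"
  have ts: "0 \<le> t * s" "t * s \<le> t * s'" "t * s' \<le> t" using s t by (auto simp: mult_le_cancel_left1)
  have tsR: "ereal (t * s') < conv_radius a" using ts(3) t(2) by (rule ereal_le_less)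
  show "pgf_K a t s \<le> pgf_K a t s'"
    using f_mono[OF ts(1,2) tsR] ft by (simp add: pgf_K_def divide_right_mono)
next
  have ft: "pser a t > 0" using f_pos[of t] t by simp
  then show "pgf_K a t 1 = 1" by (simp add: pgf_K_def)
  have "pser a 0 > 0" using f_pos[of 0] Rpos by (simp add: zero_ereal_def)
  then show "pgf_K a t 0 > 0" using ft by (simp add: pgf_K_def)
qed

lemma ext_props: assumes t: "0 < t" "ereal t < conv_radius a"
  shows "0 < extinction_prob a t" "extinction_prob a t \<le> 1"
    "pgf_K a t (extinction_prob a t) = extinction_prob a t"
    "\<And>p. 0 \<le> p \<Longrightarrow> p \<le> 1 \<Longrightarrow> pgf_K a t p = p \<Longrightarrow> extinction_prob a t \<le> p"
proof -
  define g where "g = pgf_K a t"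
  define X where "X n = (g ^^ n) 0" for n
  note gp = g_props[OF t, folded g_def]
  have XS: "X (Suc n) = g (X n)" for n by (simp add: X_def)
  have X01: "0 \<le> X n \<and> X n \<le> 1" for n
    by (induction n) (auto simp: XS X_def[of 0] gp(1))
  have below: "X n \<le> p" if p: "0 \<le> p" "p \<le> 1" "g p = p" for n p
  proof (induction n)
    case 0 then show ?case using p by (simp add: X_def)
  next
    case (Suc n)
    then show ?case using gp(2)[of "X n" p] X01[of n] p by (simp add: XS)
  qed
  have inc: "X n \<le> X (Suc n)" for n
  proof (induction n)
    case 0 then show ?case using X01[of 1] by (simp add: X_def)
  next
    case (Suc n)
    then show ?case using gp(2)[of "X n" "X (Suc n)"] X01[of n] X01[of "Suc n"] by (simp add: XS)
  qed
  obtain L where L: "X \<longlonglongrightarrow> L" "\<forall>i. X i \<le> L"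
    using incseq_convergent[of X 1] incseq_SucI[of X, OF inc] X01 by blast
  have q: "extinction_prob a t = L"
    using L(1) unfolding extinction_prob_def X_def g_def by (rule limI)
  have L1: "L \<le> 1" using L(1) X01 by (intro LIMSEQ_le_const2) auto
  have L0: "0 \<le> L" using L(1) X01 by (intro LIMSEQ_le_const) auto
  have "X 1 > 0" using gp(4) by (simp add: X_def)
  then show "0 < extinction_prob a t" using L(2) q by (metis less_le_trans)
  show "extinction_prob a t \<le> 1" using L1 q by simp
  have "(\<lambda>n. g (X n)) \<longlonglongrightarrow> g L" using gp(5)[OF L0 L1] L(1) by (rule isCont_tendsto_compose)
  moreover have "(\<lambda>n. g (X n)) \<longlonglongrightarrow> L" using LIMSEQ_Suc[OF L(1)] by (simp add: XS)
  ultimately have "g L = L" by (rule LIMSEQ_unique)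
  then show "pgf_K a t (extinction_prob a t) = extinction_prob a t" using q g_def by simp
  fix p assume p: "0 \<le> p" "p \<le> 1" "pgf_K a t p = p"
  have "L \<le> p" using L(1) below[of p] p by (intro LIMSEQ_le_const2) (auto simp: g_def)
  then show "extinction_prob a t \<le> p" using q by simp
qed

end

locale KT = KK +
  fixes \<tau> :: real
  assumes tpos: "0 < \<tau>" and tR: "ereal \<tau> < conv_radius a" and mt: "mean_K a \<tau> = 1"
begin

lemma dh_tau: "dh \<tau> = 0"
  using mean_dh[OF tpos tR] mt f_pos[of \<tau>] tpos tR by simp

lemma dh_neg: "0 < x \<Longrightarrow> x < \<tau> \<Longrightarrow> dh x < 0"
  using dh_mono[of x \<tau>] tR dh_tau by simp

lemma dh_pos: "\<tau> < x \<Longrightarrow> ereal x < conv_radius a \<Longrightarrow> dh x > 0"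
  using dh_mono[of \<tau> x] tpos dh_tau by simp

lemma hh_dec: assumes "0 < x" "x < y" "y \<le> \<tau>" shows "hh y < hh x"
proof -
  have "\<exists>z. x < z \<and> z < y \<and> hh y - hh x = (y - x) * dh z"
  proof (rule MVT2[OF assms(2)])
    fix z assume "x \<le> z" "z \<le> y"
    then show "DERIV hh z :> dh z" using assms tR by (intro hh_deriv) (auto intro: ereal_le_less)
  qed
  then obtain z where z: "x < z" "z < y" "hh y - hh x = (y - x) * dh z" by blast
  have "dh z < 0" using z assms by (intro dh_neg) auto
  then have "(y - x) * dh z < 0" using assms by (simp add: mult_pos_neg)
  then show ?thesis using z by simp
qed

lemma hh_inc: assumes "\<tau> \<le> x" "x < y" "ereal y < conv_radius a" shows "hh x < hh y"
proof -
  have "\<exists>z. x < z \<and> z < y \<and> hh y - hh x = (y - x) * dh z"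
  proof (rule MVT2[OF assms(2)])
    fix z assume "x \<le> z" "z \<le> y"
    then show "DERIV hh z :> dh z" using assms tpos by (intro hh_deriv) (auto intro: ereal_le_less)
  qed
  then obtain z where z: "x < z" "z < y" "hh y - hh x = (y - x) * dh z" by blast
  have "dh z > 0" using z assms by (intro dh_pos) (auto intro!: ereal_le_less[of z y])
  then have "(y - x) * dh z > 0" using assms by simp
  then show ?thesis using z by simp
qed

lemma hh_cont: "0 < x \<Longrightarrow> ereal x < conv_radius a \<Longrightarrow> isCont hh x"
  using hh_deriv DERIV_isCont by blast

lemma exists_pre: assumes y: "y > hh \<tau>" shows "\<exists>v. 0 < v \<and> v < \<tau> \<and> hh v = y"
proof -
  have hpos: "hh \<tau> > 0" using hh_eq[OF tpos tR] f_pos[of \<tau>] tpos tR by simp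
  then have y0: "y > 0" using y by simp
  define e where "e = min (\<tau>/2) (a 0 / y)"
  have e: "0 < e" "e < \<tau>" "e \<le> a 0 / y" using tpos a0 y0 by (auto simp: e_def)
  have eR: "ereal e < conv_radius a" using e tR by (intro ereal_le_less[of e \<tau>]) auto
  have "y \<le> a 0 / e" using e y0 a0 by (simp add: field_simps)
  also have "\<dots> \<le> hh e" using P_nn[of e] e eR by (simp add: hh_def)
  finally have ye: "y \<le> hh e" .
  have "\<exists>x. e \<le> x \<and> x \<le> \<tau> \<and> hh x = y"
    using y e ye tR by (intro IVT2) (auto intro!: hh_cont intro: ereal_le_less)
  then obtain x where x: "e \<le> x" "x \<le> \<tau>" "hh x = y" by blast
  then have "x \<noteq> \<tau>" using y by auto
  then show ?thesis using x e by (intro exI[of _ x]) auto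
qed

lemma uniq: assumes "0 < v" "v \<le> \<tau>" "0 < w" "w \<le> \<tau>" "hh v = hh w" shows "v = w"
  using hh_dec[of v w] hh_dec[of w v] assms by (cases v w rule: linorder_cases) auto

lemma fix_iff: assumes t: "0 < t" "ereal t < conv_radius a" and s: "0 < s" "s \<le> 1"
  shows "pgf_K a t s = s \<longleftrightarrow> hh (t * s) = hh t"
proof -
  have ts: "0 < t * s" "t * s \<le> t" using t s by (auto simp: mult_le_cancel_left1)
  have tsR: "ereal (t * s) < conv_radius a" using ts(2) t(2) by (rule ereal_le_less)
  have f1: "pser a t > 0" using f_pos[of t] t by simp
  have f2: "pser a (t * s) > 0" using f_pos[of "t * s"] ts tsR by simp
  have "pgf_K a t s = s \<longleftrightarrow> pser a (t * s) = s * pser a t"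
    using f1 by (auto simp: pgf_K_def field_simps)
  also have "\<dots> \<longleftrightarrow> pser a (t * s) / (t * s) = pser a t / t"
    using t s by (auto simp: field_simps)
  also have "\<dots> \<longleftrightarrow> hh (t * s) = hh t"
    using hh_eq[OF ts(1) tsR] hh_eq[OF t] by simp
  finally show ?thesis .
qed

lemma q_le: assumes t: "0 < t" "t \<le> \<tau>" shows "extinction_prob a t = 1"
proof -
  have tR: "ereal t < conv_radius a" using t tR by (intro ereal_le_less[of t \<tau>])
  note E = ext_props[OF t(1) tR]
  define q where "q = extinction_prob a t"
  have h: "hh (t * q) = hh t" using fix_iff[OF t(1) tR, of q] E by (simp add: q_def)
  show ?thesis
  proof (rule ccontr)
    assume "extinction_prob a t \<noteq> 1"
    then have "q < 1" using E by (simp add: q_def)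
    then have "t * q < t" "0 < t * q" using t E by (auto simp: q_def)
    then have "hh t < hh (t * q)" using t by (intro hh_dec) auto
    then show False using h by simp
  qed
qed

lemma q_gt: assumes t: "\<tau> < t" "ereal t < conv_radius a"
  shows "0 < t * extinction_prob a t" "t * extinction_prob a t < \<tau>"
    "hh (t * extinction_prob a t) = hh t"
proof -
  have t0: "0 < t" using t tpos by simp
  note E = ext_props[OF t0 t(2)]
  define q where "q = extinction_prob a t"
  have h: "hh (t * q) = hh t" using fix_iff[OF t0 t(2), of q] E by (simp add: q_def)
  have "hh t > hh \<tau>" using hh_inc[of \<tau> t] t by simp
  then obtain v where v: "0 < v" "v < \<tau>" "hh v = hh t" using exists_pre by blast
  have "pgf_K a t (v / t) = v / t" using fix_iff[OF t0 t(2), of "v/t"] v t0 t by simp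
  then have "q \<le> v / t" using E(4)[of "v/t"] v t t0 by (simp add: q_def)
  then have "t * q \<le> v" using t0 by (simp add: field_simps)
  then have tq: "t * q < t" using v t by linarith
  have tq0: "0 < t * q" using E t0 by (simp add: q_def)
  have "t * q < \<tau>"
  proof (rule ccontr)
    assume "\<not> t * q < \<tau>"
    then have "hh (t * q) < hh t" using hh_inc[of "t*q" t] tq t by simp
    then show False using h by simp
  qed
  then show "0 < t * extinction_prob a t" "t * extinction_prob a t < \<tau>"
    "hh (t * extinction_prob a t) = hh t" using tq0 h by (auto simp: q_def)
qed



definition "G y = (THE v. 0 < v \<and> v < \<tau> \<and> hh v = y)"

lemma G_prop: assumes "y > hh \<tau>" shows "0 < G y" "G y < \<tau>" "hh (G y) = y"
proof -
  have "\<exists>!v. 0 < v \<and> v < \<tau> \<and> hh v = y"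
    using exists_pre[OF assms] uniq by (metis less_imp_le)
  from theI'[OF this] show "0 < G y" "G y < \<tau>" "hh (G y) = y" unfolding G_def by auto
qed

lemma G_hh: assumes "0 < v" "v < \<tau>" shows "G (hh v) = v"
proof -
  have "hh v > hh \<tau>" using hh_dec[of v \<tau>] assms by simp
  from G_prop[OF this] show ?thesis using uniq[of "G (hh v)" v] assms by auto
qed

lemma mean_hh: assumes "0 < x" "ereal x < conv_radius a"
  shows "1 - mean_K a x = - x * dh x / hh x" "hh x > 0"
proof -
  have fp: "pser a x > 0" using f_pos[of x] assms by simp
  show "hh x > 0" using hh_eq[OF assms] fp assms by simp
  show "1 - mean_K a x = - x * dh x / hh x"
  proof -
    have e: "pser a x = x * hh x" using hh_eq[OF assms] assms by simp
    have "mean_K a x - 1 = x^2 * dh x / (x * hh x)" using mean_dh[OF assms] e by simp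
    also have "\<dots> = x * dh x / hh x" using assms by (simp add: power2_eq_square)
    finally show ?thesis by simp
  qed
qed

lemma deriv_lt: assumes t: "0 < t" "t < \<tau>"
  shows "(extinction_prob a has_real_derivative
              (extinction_prob a t / t) *
              ((1 - mean_K a t) / (1 - mean_K a (t * extinction_prob a t)) - 1)) (at t)"
proof -
  have tR: "ereal t < conv_radius a" using t tR by (intro ereal_le_less[of t \<tau>]) auto
  have q1: "extinction_prob a t = 1" using q_le t by simp
  have "dh t < 0" using dh_neg t by simp
  then have "1 - mean_K a t \<noteq> 0" using mean_hh[OF t(1) tR] t by simp
  then have val: "(extinction_prob a t / t) *
              ((1 - mean_K a t) / (1 - mean_K a (t * extinction_prob a t)) - 1) = 0"
    using q1 by simp
  have "((\<lambda>_. 1) has_real_derivative 0) (at t)" by simp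
  then have "(extinction_prob a has_real_derivative 0) (at t)"
  proof (rule has_field_derivative_transform_within_open[where S="{0<..<\<tau>}"])
    fix x assume "x \<in> {0<..<\<tau>}" then show "1 = extinction_prob a x" using q_le by simp
  qed (use t in auto)
  then show ?thesis unfolding val .
qed

lemma deriv_gt: assumes t: "\<tau> < t" "ereal t < conv_radius a"
  shows "(extinction_prob a has_real_derivative
              (extinction_prob a t / t) *
              ((1 - mean_K a t) / (1 - mean_K a (t * extinction_prob a t)) - 1)) (at t)"
proof -
  have t0: "0 < t" using t tpos by simp
  define u where "u = t * extinction_prob a t"
  have u: "0 < u" "u < \<tau>" "hh u = hh t" using q_gt[OF t] by (auto simp: u_def)
  have uR: "ereal u < conv_radius a" using u tR by (intro ereal_le_less[of u \<tau>]) auto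
  have Gu: "G (hh t) = u" using G_hh[OF u(1,2)] u(3) by simp
  have ext_eq: "extinction_prob a s = G (hh s) / s" if s: "\<tau> < s" "ereal s < conv_radius a" for s
  proof -
    have "G (hh s) = s * extinction_prob a s" using q_gt[OF s] G_hh by metis
    then show ?thesis using s tpos by simp
  qed
  have htau: "hh t > hh \<tau>" using hh_inc[of \<tau> t] t by simp
  have dhu: "dh u < 0" using dh_neg u by simp
  have contG: "isCont G (hh t)"
  proof -
    define d where "d = min u (\<tau> - u) / 2"
    have d: "0 < d" using u by (simp add: d_def)
    have zp: "G (hh z) = z \<and> isCont hh z" if z: "\<bar>z - u\<bar> \<le> d" for z
    proof -
      from z have "z - u \<le> d" "u - z \<le> d" by auto
      then have zz: "0 < z" "z < \<tau>" using u unfolding d_def by auto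
      have zR: "ereal z < conv_radius a" using tR zz by (intro ereal_le_less[of z \<tau>]) auto
      show ?thesis using G_hh hh_cont[of z] zz zR by auto
    qed
    have "isCont G (hh u)"
      by (rule isCont_inverse_function[OF d]) (use zp in auto)
    then show ?thesis using u by simp
  qed
  have dG: "DERIV G (hh t) :> inverse (dh u)"
  proof (rule DERIV_inverse_function[where f=hh and a="hh \<tau>" and b="hh t + 1"])
    show "DERIV hh (G (hh t)) :> dh u" using Gu hh_deriv[OF u(1) uR] by simp
    fix y assume "hh \<tau> < y" "y < hh t + 1"
    then show "hh (G y) = y" using G_prop by simp
  qed (use dhu htau contG in auto)
  have "DERIV (\<lambda>s. G (hh s)) t :> inverse (dh u) * dh t"
    using DERIV_chain2[OF dG hh_deriv[OF t0 t(2)]] .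
  then have d1: "DERIV (\<lambda>s. G (hh s) / s) t :> (inverse (dh u) * dh t * t - G (hh t)) / t^2"
    using t0 by (auto intro!: derivative_eq_intros simp: power2_eq_square)
  obtain r where r: "t < r" "ereal r < conv_radius a" using ereal_between[OF t(2)] by blast
  have d2: "(extinction_prob a has_real_derivative (inverse (dh u) * dh t * t - u) / t^2) (at t)"
    using d1 unfolding Gu
  proof (rule has_field_derivative_transform_within_open[where S="{\<tau><..<r}"])
    fix x assume "x \<in> {\<tau><..<r}"
    moreover have "ereal x < conv_radius a" using r \<open>x \<in> {\<tau><..<r}\<close> by (intro ereal_le_less[of x r]) auto
    ultimately show "G (hh x) / x = extinction_prob a x" using ext_eq[of x] by auto
  qed (use t r in auto)
  have m1: "1 - mean_K a t = - t * dh t / hh t" "hh t > 0" using mean_hh[OF t0 t(2)] by auto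
  have m2: "1 - mean_K a u = - u * dh u / hh t" using mean_hh[OF u(1) uR] u(3) by auto
  have "(extinction_prob a t / t) * ((1 - mean_K a t) / (1 - mean_K a (t * extinction_prob a t)) - 1)
      = (u / t^2) * ((- t * dh t / hh t) / (- u * dh u / hh t) - 1)"
    using m1 m2 t0 by (simp add: u_def[symmetric] power2_eq_square, simp add: u_def)
  also have "\<dots> = (inverse (dh u) * dh t * t - u) / t^2"
    using m1 dhu u t0 by (simp add: field_simps power2_eq_square)
  finally show ?thesis using d2 by simp
qed


lemma lim_left: "((\<lambda>t. (extinction_prob a t - 1) / (t - \<tau>)) \<longlongrightarrow> 0) (at_left \<tau>)"
proof -
  have "eventually (\<lambda>t. t \<in> {0<..<\<tau>}) (at_left \<tau>)" using eventually_at_left_real tpos by blast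
  then have "eventually (\<lambda>t. 0 = (extinction_prob a t - 1) / (t - \<tau>)) (at_left \<tau>)"
    by eventually_elim (auto simp: q_le)
  then show ?thesis using tendsto_cong[of "\<lambda>_. 0"] by (metis tendsto_const)
qed

lemma lim_right: "((\<lambda>t. (extinction_prob a t - 1) / (t - \<tau>)) \<longlongrightarrow> - 2 / \<tau>) (at_right \<tau>)"
proof -
  obtain \<rho> where rho: "\<tau> < \<rho>" "ereal \<rho> < conv_radius a" using ereal_between[OF tR] by blast
  define k where "k x = (hh x - hh \<tau>) / (x - \<tau>)^2" for x
  define c where "c = ddh \<tau> / 2"
  have c: "c > 0" using ddh_pos[OF tpos tR] by (simp add: c_def)
  have K1: "(k \<longlongrightarrow> c) (at \<tau>)"
    unfolding k_def[abs_def]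
  proof (rule lhopital[where f'=dh and g'="\<lambda>x. 2 * (x - \<tau>)"])
    have "(hh \<longlongrightarrow> hh \<tau>) (at \<tau>)" using hh_cont[OF tpos tR] by (simp add: isCont_def)
    then show "((\<lambda>x. hh x - hh \<tau>) \<longlongrightarrow> 0) (at \<tau>)" by (rule LIM_zero)
    have "((\<lambda>x. (x - \<tau>)^2) \<longlongrightarrow> (\<tau> - \<tau>)^2) (at \<tau>)" by (intro tendsto_intros)
    then show "((\<lambda>x. (x - \<tau>)^2) \<longlongrightarrow> 0) (at \<tau>)" by simp
    show "eventually (\<lambda>x. (x - \<tau>)^2 \<noteq> 0) (at \<tau>)"
      by (auto simp: eventually_at intro!: exI[of _ 1])
    show "eventually (\<lambda>x. 2 * (x - \<tau>) \<noteq> 0) (at \<tau>)"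
      by (auto simp: eventually_at intro!: exI[of _ 1])
    show "eventually (\<lambda>x. DERIV (\<lambda>x. (x - \<tau>)^2) x :> 2 * (x - \<tau>)) (at \<tau>)"
      by (auto intro!: always_eventually derivative_eq_intros)
    have dd: "DERIV (\<lambda>x. hh x - hh \<tau>) x :> dh x" if x: "dist x \<tau> < min \<tau> (\<rho> - \<tau>)" for x
    proof -
      from x have "0 < x" "x < \<rho>" by (auto simp: dist_real_def abs_less_iff)
      moreover have "ereal x < conv_radius a" using rho \<open>x < \<rho>\<close> by (intro ereal_le_less[of x \<rho>]) auto
      ultimately have "DERIV hh x :> dh x" by (intro hh_deriv)
      from DERIV_diff[OF this DERIV_const] show ?thesis by simp
    qed
    show "eventually (\<lambda>x. DERIV (\<lambda>x. hh x - hh \<tau>) x :> dh x) (at \<tau>)"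
      unfolding eventually_at using dd tpos rho by (intro exI[of _ "min \<tau> (\<rho> - \<tau>)"]) auto
    have "((\<lambda>y. (dh y - dh \<tau>) / (y - \<tau>)) \<longlongrightarrow> ddh \<tau>) (at \<tau>)"
      using dh_deriv[OF tpos tR] by (simp add: has_field_derivative_iff)
    then have "((\<lambda>y. (dh y - dh \<tau>) / (y - \<tau>) / 2) \<longlongrightarrow> ddh \<tau> / 2) (at \<tau>)"
      by (intro tendsto_divide tendsto_const) auto
    then show "((\<lambda>x. dh x / (2 * (x - \<tau>))) \<longlongrightarrow> c) (at \<tau>)"
      by (simp add: dh_tau c_def mult.commute)
  qed
  define u where "u t = t * extinction_prob a t" for t
  have ev1: "eventually (\<lambda>t. t \<in> {\<tau><..<\<rho>}) (at_right \<tau>)"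
    using eventually_at_right_real rho by blast
  have ev_u: "eventually (\<lambda>t. \<tau> < t \<and> t < \<rho> \<and> 0 < u t \<and> u t < \<tau> \<and> hh (u t) = hh t) (at_right \<tau>)"
    using ev1
  proof eventually_elim
    case (elim t)
    then have "ereal t < conv_radius a" using rho by (intro ereal_le_less[of t \<rho>]) auto
    then show ?case using q_gt[of t] elim by (auto simp: u_def)
  qed
  have hcont: "(hh \<longlongrightarrow> hh \<tau>) (at_right \<tau>)"
    using hh_cont[OF tpos tR] by (auto simp: isCont_def intro: tendsto_mono[OF at_le[OF subset_UNIV]])
  have utend: "(u \<longlongrightarrow> \<tau>) (at_right \<tau>)"
  proof (rule order_tendstoI)
    fix y assume y: "y < \<tau>"
    define e where "e = max y (\<tau> / 2)"
    have e: "0 < e" "e < \<tau>" "y \<le> e" using y tpos by (auto simp: e_def)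
    have he: "hh e > hh \<tau>" using hh_dec[of e \<tau>] e by simp
    have "eventually (\<lambda>t. hh t < hh e) (at_right \<tau>)" using order_tendstoD(2)[OF hcont he] .
    with ev_u show "eventually (\<lambda>t. y < u t) (at_right \<tau>)"
    proof eventually_elim
      case (elim t)
      have "\<not> u t \<le> e"
      proof
        assume le: "u t \<le> e"
        have "hh e \<le> hh (u t)"
        proof (cases "u t < e")
          case True then show ?thesis using hh_dec[of "u t" e] elim e by simp
        qed (use le in simp)
        then show False using elim by simp
      qed
      then show ?case using e by simp
    qed
  next
    fix y assume y: "y > \<tau>"
    from ev_u show "eventually (\<lambda>t. u t < y) (at_right \<tau>)" by eventually_elim (use y in auto)
  qed
  have K2: "filterlim u (at \<tau>) (at_right \<tau>)"
    unfolding filterlim_at using utend ev_u by (auto elim: eventually_mono)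
  have K3: "((\<lambda>t. k (u t)) \<longlongrightarrow> c) (at_right \<tau>)" using filterlim_compose[OF K1 K2] .
  have K4: "(k \<longlongrightarrow> c) (at_right \<tau>)" using tendsto_mono[OF at_le[OF subset_UNIV] K1] .
  have K6: "((\<lambda>t. (- sqrt (k t / k (u t)) - 1) / t) \<longlongrightarrow> (- sqrt (c / c) - 1) / \<tau>) (at_right \<tau>)"
  proof -
    have "((\<lambda>t. k t / k (u t)) \<longlongrightarrow> c / c) (at_right \<tau>)" by (rule tendsto_divide[OF K4 K3]) (use c in simp)
    then have "((\<lambda>t. sqrt (k t / k (u t))) \<longlongrightarrow> sqrt (c / c)) (at_right \<tau>)" by (rule tendsto_real_sqrt)
    then have "((\<lambda>t. - sqrt (k t / k (u t)) - 1) \<longlongrightarrow> - sqrt (c / c) - 1) (at_right \<tau>)"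
      by (intro tendsto_diff tendsto_minus tendsto_const)
    then show ?thesis by (rule tendsto_divide[OF _ tendsto_ident_at]) (use tpos in simp)
  qed
  have ev_eq: "eventually (\<lambda>t. (- sqrt (k t / k (u t)) - 1) / t = (extinction_prob a t - 1) / (t - \<tau>)) (at_right \<tau>)"
    using ev_u
  proof eventually_elim
    case (elim t)
    define A where "A = u t - \<tau>"
    define B where "B = t - \<tau>"
    have A: "A < 0" and B: "B > 0" using elim by (auto simp: A_def B_def)
    have hpos: "hh t - hh \<tau> > 0" using hh_dec[of "u t" \<tau>] elim by simp
    have kt: "k t = (hh t - hh \<tau>) / B^2" by (simp add: k_def B_def)
    have ku: "k (u t) = (hh t - hh \<tau>) / A^2" using elim by (simp add: k_def A_def)
    have "k t / k (u t) = ((hh t - hh \<tau>) / B^2) / ((hh t - hh \<tau>) / A^2)" by (simp only: kt ku)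
    also have "\<dots> = A^2 / B^2" using hpos by simp
    also have "\<dots> = (A / B)^2" by (simp add: power_divide)
    finally have "k t / k (u t) = (A / B)^2" .
    then have "sqrt (k t / k (u t)) = - (A / B)" using A B alg2 by simp
    then have "- sqrt (k t / k (u t)) = A / B" by simp
    moreover have "(A / B - 1) / t = (extinction_prob a t - 1) / (t - \<tau>)"
    proof -
      have "extinction_prob a t = u t / t" using elim tpos by (simp add: u_def)
      then show ?thesis unfolding A_def B_def using alg1[of t \<tau> "u t"] elim tpos by simp
    qed
    ultimately show ?case by simp
  qed
  have "((\<lambda>t. (extinction_prob a t - 1) / (t - \<tau>)) \<longlongrightarrow> (- sqrt (c / c) - 1) / \<tau>) (at_right \<tau>)"
    using tendsto_cong[OF ev_eq, THEN iffD1, OF K6] .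
  then show ?thesis using c by simp
qed

end

theorem theorem6p8:
  fixes a :: "nat \<Rightarrow> real" and \<tau> :: real
  assumes "in_K_star a"
    and "0 < \<tau>" and "ereal \<tau> < conv_radius a" and "mean_K a \<tau> = 1"
  shows "(\<forall>t. 0 < t \<and> ereal t < conv_radius a \<and> t \<noteq> \<tau> \<longrightarrow>
           (extinction_prob a has_real_derivative
              (extinction_prob a t / t) *
              ((1 - mean_K a t) / (1 - mean_K a (t * extinction_prob a t)) - 1)) (at t)) \<and>
         ((\<lambda>t. (extinction_prob a t - 1) / (t - \<tau>)) \<longlongrightarrow> - 2 / \<tau>) (at_right \<tau>) \<and>
         ((\<lambda>t. (extinction_prob a t - 1) / (t - \<tau>)) \<longlongrightarrow> 0) (at_left \<tau>)"
proof -
  from assms(1) have aK: "in_K a" by (simp add: in_K_star_def)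
  interpret KT a \<tau>
    using aK assms(2-4) by unfold_locales (auto simp: in_K_def)
  have "(extinction_prob a has_real_derivative
              (extinction_prob a t / t) *
              ((1 - mean_K a t) / (1 - mean_K a (t * extinction_prob a t)) - 1)) (at t)"
    if t: "0 < t" "ereal t < conv_radius a" "t \<noteq> \<tau>" for t
  proof (cases "t < \<tau>")
    case True then show ?thesis using deriv_lt t by simp
  next
    case False then show ?thesis using deriv_gt t by simp
  qed
  then show ?thesis using lim_left lim_right by blast
qed

end
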